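(* Let ${\mathcal M}$ be a $q$-matroid on $\mathbb{F}_q^n$ of rank $k$ with $0<k<n$. Then there is no nonzero vector $x\in\mathbb{F}_q^n$ that belongs to every basis of ${\mathcal M}$.
   Context: A $q$-matroid is a pair $(E,\rho)$, $E=\mathbb{F}_q^n$, with $\rho$ from the set of subspaces of $E$ to $\mathbb{Z}_{\ge0}$ satisfying $0\le\rho(X)\le\dim X$, $\rho(X)\le\rho(Y)$ for $X\subseteq Y$, and $\rho(X+Y)+\rho(X\cap Y)\le\rho(X)+\rho(Y)$; its rank is $\rho(E)$. A subspace $U$ is independent if $\rho(U)=\dim U$, and a basis is an independent subspace not strictly contained in any independent subspace. *)

theory Defs
  imports "HOL-Analysis.Analysis"
begin

text \<open>A q-matroid on E = F_q^n, with F_q modelled as an arbitrary finite field 'a and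
 E = 'a^'n (n = CARD('n)).
 The rank function is nat-valued (so nonnegativity is automatic) and the axioms
 are imposed on subspaces only.\<close>

definition is_qmatroid :: "(('a::{field,finite}^'n) set \<Rightarrow> nat) \<Rightarrow> bool" where
  "is_qmatroid \<rho> \<longleftrightarrow>
     (\<forall>X. vec.subspace X \<longrightarrow> \<rho> X \<le> vec.dim X) \<and>
     (\<forall>X Y. vec.subspace X \<longrightarrow> vec.subspace Y \<longrightarrow> X \<subseteq> Y \<longrightarrow> \<rho> X \<le> \<rho> Y) \<and>
     (\<forall>X Y. vec.subspace X \<longrightarrow> vec.subspace Y \<longrightarrow>
        \<rho> (X + Y) + \<rho> (X \<inter> Y) \<le> \<rho> X + \<rho> Y)"

definition qm_rank :: "(('a::{field,finite}^'n) set \<Rightarrow> nat) \<Rightarrow> nat" where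
  "qm_rank \<rho> = \<rho> UNIV"

definition qm_indep :: "(('a::{field,finite}^'n) set \<Rightarrow> nat) \<Rightarrow> ('a^'n) set \<Rightarrow> bool" where
  "qm_indep \<rho> U \<longleftrightarrow> vec.subspace U \<and> \<rho> U = vec.dim U"

definition qm_basis :: "(('a::{field,finite}^'n) set \<Rightarrow> nat) \<Rightarrow> ('a^'n) set \<Rightarrow> bool" where
  "qm_basis \<rho> B \<longleftrightarrow> qm_indep \<rho> B \<and> \<not> (\<exists>V. qm_indep \<rho> V \<and> B \<subset> V)"

end

theory Submission
  imports Defs
begin

lemma vec_span_Un_plus:
  "vec.span (A \<union> C) = vec.span A + vec.span (C::('a::field^'n) set)"
  unfolding vec.span_Un set_plus_def by blast

theorem lemma5p4:
  fixes \<rho> :: "('a::{field,finite}^'n) set \<Rightarrow> nat" and k :: nat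
  assumes "is_qmatroid \<rho>" and "qm_rank \<rho> = k" and "0 < k" and "k < CARD('n)"
  shows "\<not> (\<exists>x::'a^'n. x \<noteq> 0 \<and> (\<forall>B. qm_basis \<rho> B \<longrightarrow> x \<in> B))"
proof
  assume "\<exists>x::'a^'n. x \<noteq> 0 \<and> (\<forall>B. qm_basis \<rho> B \<longrightarrow> x \<in> B)"
  then obtain x :: "'a^'n" where x0: "x \<noteq> 0" and xall: "\<And>B. qm_basis \<rho> B \<Longrightarrow> x \<in> B" by blast
  have dimb: "\<And>X. vec.subspace X \<Longrightarrow> \<rho> X \<le> vec.dim X"
    and mono: "\<And>X Y. vec.subspace X \<Longrightarrow> vec.subspace Y \<Longrightarrow> X \<subseteq> Y \<Longrightarrow> \<rho> X \<le> \<rho> Y"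
    and sub: "\<And>X Y. vec.subspace X \<Longrightarrow> vec.subspace Y \<Longrightarrow> \<rho> (X + Y) + \<rho> (X \<inter> Y) \<le> \<rho> X + \<rho> Y"
    using assms(1) unfolding is_qmatroid_def by blast+
  have rk: "\<rho> UNIV = k" using assms(2) by (simp add: qm_rank_def)
  have indb: "\<And>U. qm_indep \<rho> U \<Longrightarrow> vec.dim U \<le> k"
    using mono[of _ UNIV] rk unfolding qm_indep_def by (metis subset_UNIV vec.subspace_UNIV)
  have "vec.subspace {0::'a^'n}" by (metis vec.span_empty vec.subspace_span)
  moreover have "vec.dim {0::'a^'n} = 0" by (metis vec.dim_span vec.dim_empty vec.span_empty)
  ultimately have i0: "qm_indep \<rho> {0}" using dimb[of "{0}"] unfolding qm_indep_def by simp
  obtain B0 where B0: "qm_indep \<rho> B0" and B0max: "\<And>U. qm_indep \<rho> U \<Longrightarrow> vec.dim U \<le> vec.dim B0"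
  proof -
    define P where "P = (\<lambda>d. \<exists>U. qm_indep \<rho> U \<and> vec.dim U = d)"
    have P0: "P 0" unfolding P_def using i0 \<open>vec.dim {0::'a^'n} = 0\<close> by blast
    have Pb: "\<forall>e. P e \<longrightarrow> e \<le> k" unfolding P_def using indb by auto
    have "\<exists>d. P d \<and> (\<forall>e. P e \<longrightarrow> e \<le> d)" by (rule Nat.ex_has_greatest_nat[OF P0 Pb])
    then have "\<exists>d. (\<exists>U. qm_indep \<rho> U \<and> vec.dim U = d) \<and> (\<forall>e. (\<exists>U. qm_indep \<rho> U \<and> vec.dim U = e) \<longrightarrow> e \<le> d)"
      unfolding P_def .
    then obtain d U where "qm_indep \<rho> U" "vec.dim U = d"
      "\<And>e V. qm_indep \<rho> V \<Longrightarrow> vec.dim V \<le> d" by blast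
    then show ?thesis using that by metis
  qed
  define m where "m = vec.dim B0"
  have isb: "qm_basis \<rho> U" if U: "qm_indep \<rho> U" "vec.dim U = m" for U
  proof -
    have "\<not> (qm_indep \<rho> V \<and> U \<subset> V)" for V
    proof
      assume V: "qm_indep \<rho> V \<and> U \<subset> V"
      then have "vec.span U \<subset> vec.span V" using U unfolding qm_indep_def by (metis vec.span_eq_iff)
      then have "vec.dim U < vec.dim V" by (rule vec.dim_psubset)
      with B0max[of V] V U(2) show False unfolding m_def by simp
    qed
    then show ?thesis using U unfolding qm_basis_def by blast
  qed
  have B0s: "vec.subspace B0" and rB0: "\<rho> B0 = m" using B0 unfolding qm_indep_def m_def by auto
  have xB0: "x \<in> B0" using xall isb[OF B0] m_def by simp
  have "B0 \<noteq> UNIV"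
  proof
    assume "B0 = UNIV"
    then have "\<rho> UNIV = CARD('n)" using rB0 m_def vec_dim_card by metis
    then show False using rk assms(4) by simp
  qed
  then obtain y where yB0: "y \<notin> B0" by blast
  have "vec.independent {x}" using x0 by (simp add: vec.independent_insert)
  then obtain S where S: "{x} \<subseteq> S" "S \<subseteq> B0" "vec.independent S" "B0 \<subseteq> vec.span S"
    using vec.maximal_independent_subset_extend[of "{x}" B0] xB0 by blast
  have spS: "vec.span S = B0" using S B0s vec.span_minimal by blast
  define T where "T = S - {x}"
  have ST: "S = insert x T" "x \<notin> T" using S(1) T_def by auto
  have finT: "finite T" by simp
  have xT: "x \<notin> vec.span T" using S(3) ST by (metis vec.independent_insert)
  have indT: "vec.independent T" using S(3) ST by (metis vec.independent_insert)
  have TS: "vec.span T \<subseteq> B0" using spS ST by (metis subset_insertI vec.span_mono)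
  have yT: "y \<notin> vec.span T" using TS yB0 by blast
  have xyT: "x + y \<notin> vec.span T"
  proof
    assume "x + y \<in> vec.span T"
    then have "x + y \<in> B0" using TS by blast
    then have "(x + y) - x \<in> B0" using xB0 B0s by (metis vec.subspace_diff)
    then show False using yB0 by simp
  qed
  have yT': "y \<notin> T" and xyT': "x + y \<notin> T" using yT xyT vec.span_base by blast+
  have cardS: "card S = Suc (card T)" using ST finT by simp
  have dimS: "vec.dim B0 = card S" using spS S(3) vec.dim_span_eq_card_independent by metis
  define X where "X = vec.span (insert y T)"
  define Y where "Y = vec.span (insert (x + y) T)"
  define H where "H = vec.span T"
  have dX: "vec.dim X = m" unfolding X_def m_def
    using vec.dim_span_eq_card_independent[of "insert y T"] vec.independent_insertI[OF yT indT]
      finT yT' cardS dimS by simp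
  have dY: "vec.dim Y = m" unfolding Y_def m_def
    using vec.dim_span_eq_card_independent[of "insert (x+y) T"] vec.independent_insertI[OF xyT indT]
      finT xyT' cardS dimS by simp
  have rH: "m \<le> \<rho> H + 1"
  proof -
    have e: "H + vec.span {x} = B0" unfolding H_def
      using vec_span_Un_plus[of T "{x}"] spS ST by simp
    have "\<rho> (vec.span {x}) \<le> vec.dim (vec.span {x})" by (rule dimb) simp
    also have "\<dots> \<le> 1" using vec.dim_le_card[of "{x}" "{x}"] vec.span_superset by simp
    finally have "\<rho> (vec.span {x}) \<le> 1" .
    moreover have "\<rho> (H + vec.span {x}) + \<rho> (H \<inter> vec.span {x}) \<le> \<rho> H + \<rho> (vec.span {x})"
      by (rule sub) (simp_all add: H_def)
    ultimately show ?thesis using e rB0 by simp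
  qed
  have XY: "B0 \<subseteq> X + Y"
  proof -
    have "X + Y = vec.span (insert y T \<union> insert (x+y) T)"
      unfolding X_def Y_def by (rule vec_span_Un_plus[symmetric])
    moreover have "S \<subseteq> vec.span (insert y T \<union> insert (x+y) T)"
    proof -
      have a1: "x + y \<in> vec.span (insert y T \<union> insert (x+y) T)"
        by (rule vec.span_base) simp
      have a2: "y \<in> vec.span (insert y T \<union> insert (x+y) T)"
        by (rule vec.span_base) simp
      have "(x + y) - y \<in> vec.span (insert y T \<union> insert (x+y) T)"
        by (rule vec.span_diff[OF a1 a2])
      then have a3: "x \<in> vec.span (insert y T \<union> insert (x+y) T)" by simp
      have a4: "T \<subseteq> vec.span (insert y T \<union> insert (x+y) T)"
        using vec.span_superset[of "insert y T \<union> insert (x+y) T"] by (rule order_trans[rotated]) auto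
      show ?thesis unfolding ST(1) using a3 a4 by (rule insert_subsetI)
    qed
    ultimately show ?thesis using spS vec.span_minimal vec.subspace_span by metis
  qed
  have sXY: "vec.subspace (X + Y)"
    unfolding X_def Y_def vec_span_Un_plus[symmetric] by simp
  have HXY: "H \<subseteq> X \<inter> Y" unfolding H_def X_def Y_def
    by (simp add: subset_insertI vec.span_mono)
  have r1: "m \<le> \<rho> (X + Y)" using mono[OF B0s sXY XY] rB0 by simp
  have r2: "\<rho> H \<le> \<rho> (X \<inter> Y)" using mono[OF _ _ HXY]
    by (simp add: H_def X_def Y_def vec.subspace_inter)
  have "\<rho> (X + Y) + \<rho> (X \<inter> Y) \<le> \<rho> X + \<rho> Y" by (rule sub) (simp_all add: X_def Y_def)
  moreover have "\<rho> X \<le> m" "\<rho> Y \<le> m" using dimb[of X] dimb[of Y] dX dY by (simp_all add: X_def Y_def)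
  ultimately have "\<rho> X = m \<or> \<rho> Y = m" using r1 r2 rH by linarith
  then have "x \<in> X \<or> x \<in> Y"
    using isb[of X] isb[of Y] xall dX dY unfolding qm_indep_def by (auto simp: X_def Y_def)
  moreover have "x \<notin> X"
  proof
    assume "x \<in> X"
    then obtain c where c: "x - c *s y \<in> vec.span T" unfolding X_def vec.span_breakdown_eq by blast
    show False
    proof (cases "c = 0")
      case True then show ?thesis using c xT by simp
    next
      case False
      have "x - (x - c *s y) \<in> B0" using c TS xB0 B0s by (meson subsetD vec.subspace_diff)
      then have "c *s y \<in> B0" by simp
      then have "inverse c *s (c *s y) \<in> B0" using B0s vec.subspace_scale by blast
      then show False using False yB0 by simp
    qed
  qed
  moreover have "x \<notin> Y"
  proof
    assume "x \<in> Y"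
    then obtain c where c: "x - c *s (x + y) \<in> vec.span T" unfolding Y_def vec.span_breakdown_eq by blast
    show False
    proof (cases "c = 0")
      case True then show ?thesis using c xT by simp
    next
      case False
      have "x - (x - c *s (x + y)) \<in> B0" using c TS xB0 B0s by (meson subsetD vec.subspace_diff)
      then have "c *s (x + y) \<in> B0" by simp
      then have "inverse c *s (c *s (x + y)) \<in> B0" using B0s vec.subspace_scale by blast
      then have "x + y \<in> B0" using False by simp
      then have "(x + y) - x \<in> B0" using xB0 B0s by (metis vec.subspace_diff)
      then show False using yB0 by simp
    qed
  qed
  ultimately show False by blast
qed

end
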